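(* A strongly regular graph with parameters $(76,30,8,14)$ does not contain $K_5-e$ as an induced subgraph, where $K_5-e$ is the graph on $5$ vertices obtained from $K_5$ by deleting one edge.
   Context: A graph is strongly regular with parameters $(v,k,\lambda,\mu)$ if it has $v$ vertices, is $k$-regular, adjacent vertices have exactly $\lambda$ common neighbours and distinct non-adjacent vertices have exactly $\mu$ common neighbours. *)

theory Defs
  imports Main
begin

definition simple_graph :: "'a set \<Rightarrow> ('a \<Rightarrow> 'a \<Rightarrow> bool) \<Rightarrow> bool" where
  "simple_graph V E \<longleftrightarrow> finite V \<and> (\<forall>x y. E x y \<longrightarrow> x \<in> V \<and> y \<in> V) \<and>
     (\<forall>x y. E x y \<longrightarrow> E y x) \<and> (\<forall>x. \<not> E x x)"

definition common_nbrs :: "'a set \<Rightarrow> ('a \<Rightarrow> 'a \<Rightarrow> bool) \<Rightarrow> 'a \<Rightarrow> 'a \<Rightarrow> nat" where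
  "common_nbrs V E x y = card {z \<in> V. E x z \<and> E y z}"

definition strongly_regular ::
  "'a set \<Rightarrow> ('a \<Rightarrow> 'a \<Rightarrow> bool) \<Rightarrow> nat \<Rightarrow> nat \<Rightarrow> nat \<Rightarrow> nat \<Rightarrow> bool" where
  "strongly_regular V E v k lam mu \<longleftrightarrow> simple_graph V E \<and> card V = v \<and>
     (\<forall>x\<in>V. card {y \<in> V. E x y} = k) \<and>
     (\<forall>x\<in>V. \<forall>y\<in>V. E x y \<longrightarrow> common_nbrs V E x y = lam) \<and>
     (\<forall>x\<in>V. \<forall>y\<in>V. x \<noteq> y \<and> \<not> E x y \<longrightarrow> common_nbrs V E x y = mu)"

definition has_induced_subgraph ::
  "'a set \<Rightarrow> ('a \<Rightarrow> 'a \<Rightarrow> bool) \<Rightarrow> nat \<Rightarrow> (nat \<Rightarrow> nat \<Rightarrow> bool) \<Rightarrow> bool" where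
  "has_induced_subgraph V E n EH \<longleftrightarrow>
     (\<exists>f. inj_on f {0..<n} \<and> f ` {0..<n} \<subseteq> V \<and>
          (\<forall>i\<in>{0..<n}. \<forall>j\<in>{0..<n}. E (f i) (f j) \<longleftrightarrow> EH i j))"

definition K5_minus_e :: "nat \<Rightarrow> nat \<Rightarrow> bool" where
  "K5_minus_e i j \<longleftrightarrow> i \<noteq> j \<and> {i, j} \<noteq> {0, 1}"

end

theory Submission
  imports Defs
begin

lemma split5:
  assumes "finite V" "{a,b,c,d,e} \<subseteq> V" "distinct [a,b,c,d,e]"
  shows "sum g V = sum g (V - {a,b,c,d,e}) + (g a + g b + g c + g d + g e)"
proof -
  have "sum g V = sum g (V - {a,b,c,d,e}) + sum g {a,b,c,d,e}"
    using sum.subset_diff[OF assms(2) assms(1)] by simp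
  also have "sum g {a,b,c,d,e} = g a + g b + g c + g d + g e"
    using assms(3) by (simp add: add.assoc)
  finally show ?thesis .
qed

lemma pointwise:
  fixes b c d e :: bool
  shows "(0::int) \<le> of_bool (b \<and> c) + of_bool (b \<and> d) + of_bool (b \<and> e) + of_bool (c \<and> d)
     + of_bool (c \<and> e) + of_bool (d \<and> e) - (of_bool b + of_bool c + of_bool d + of_bool e) + 1"
  by (cases b; cases c; cases d; cases e; simp)

theorem mainTheorem9:
  fixes V :: "'a set" and E :: "'a \<Rightarrow> 'a \<Rightarrow> bool"
  assumes "strongly_regular V E 76 30 8 14"
  shows "\<not> has_induced_subgraph V E 5 K5_minus_e"
proof
  assume "has_induced_subgraph V E 5 K5_minus_e"
  then obtain f where inj: "inj_on f {0..<5}" and fV: "f ` {0..<5} \<subseteq> V"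
    and fE: "\<forall>i\<in>{0..<5}. \<forall>j\<in>{0..<5}. E (f i) (f j) \<longleftrightarrow> K5_minus_e i j"
    unfolding has_induced_subgraph_def by blast
  define a where "a = f 0"
  define b where "b = f 1"
  define c where "c = f 2"
  define d where "d = f 3"
  define e where "e = f 4"
  have fin: "finite V" and sym: "\<And>x y. E x y \<Longrightarrow> E y x" and irr: "\<And>x. \<not> E x x"
    and inV: "\<And>x y. E x y \<Longrightarrow> x \<in> V"
    and cardV: "card V = 76"
    and deg: "\<And>x. x \<in> V \<Longrightarrow> card {y \<in> V. E x y} = 30"
    and lam: "\<And>x y. x \<in> V \<Longrightarrow> y \<in> V \<Longrightarrow> E x y \<Longrightarrow> card {z \<in> V. E x z \<and> E y z} = 8"
    and mu: "\<And>x y. x \<in> V \<Longrightarrow> y \<in> V \<Longrightarrow> x \<noteq> y \<Longrightarrow> \<not> E x y \<Longrightarrow> card {z \<in> V. E x z \<and> E y z} = 14"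
    using assms unfolding strongly_regular_def simple_graph_def common_nbrs_def by blast+
  have S: "{a,b,c,d,e} \<subseteq> V" using fV by (auto simp: a_def b_def c_def d_def e_def)
  have Eij: "\<And>i j. i < 5 \<Longrightarrow> j < 5 \<Longrightarrow> E (f i) (f j) \<longleftrightarrow> K5_minus_e i j" using fE by auto
  have adj: "\<not> E a b" "E a c" "E a d" "E a e" "E b c" "E b d" "E b e" "E c d" "E c e" "E d e"
    unfolding a_def b_def c_def d_def e_def
    by (simp_all add: Eij K5_minus_e_def doubleton_eq_iff)
  have adj2: "\<not> E b a" "E c a" "E d a" "E e a" "E c b" "E d b" "E e b" "E d c" "E e c" "E e d"
    using adj sym by blast+
  have ab: "a \<noteq> b"
  proof
    assume "a = b"
    then have "(0::nat) = 1" using inj_onD[OF inj, of 0 1] unfolding a_def b_def by simp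
    then show False by simp
  qed
  have dist: "distinct [a,b,c,d,e]"
    using ab adj irr by auto
  note irrs = irr[of a] irr[of b] irr[of c] irr[of d] irr[of e]
  define Out where "Out = V - {a,b,c,d,e}"
  have sp: "\<And>g. sum g V = sum g Out + (g a + g b + g c + g d + g e)"
    unfolding Out_def by (rule split5[OF fin S dist])
  have one: "\<And>s. s \<in> V \<Longrightarrow> (\<Sum>x\<in>V. of_bool (E s x) :: int) = 30"
  proof -
    fix s assume "s \<in> V"
    have "V \<inter> {x. E s x} = {y \<in> V. E s y}" by blast
    then show "(\<Sum>x\<in>V. of_bool (E s x) :: int) = 30" using deg[OF \<open>s \<in> V\<close>] fin by simp
  qed
  have two: "\<And>s t. s \<in> V \<Longrightarrow> t \<in> V \<Longrightarrow> E s t \<Longrightarrow> (\<Sum>x\<in>V. of_bool (E s x \<and> E t x) :: int) = 8"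
  proof -
    fix s t assume "s \<in> V" "t \<in> V" "E s t"
    have "V \<inter> {x. E s x \<and> E t x} = {y \<in> V. E s y \<and> E t y}" by blast
    then show "(\<Sum>x\<in>V. of_bool (E s x \<and> E t x) :: int) = 8" using lam[OF \<open>s \<in> V\<close> \<open>t \<in> V\<close> \<open>E s t\<close>] fin by simp
  qed
  have aV: "a \<in> V" and bV: "b \<in> V" and cV: "c \<in> V" and dV: "d \<in> V" and eV: "e \<in> V" using S by auto
  have cOut: "card Out = 71"
  proof -
    have "card Out = card V - card {a,b,c,d,e}" unfolding Out_def using S fin by (simp add: card_Diff_subset)
    also have "card {a,b,c,d,e} = 5" using dist by simp
    finally show ?thesis using cardV by simp
  qed
  have o1: "(\<Sum>x\<in>Out. of_bool (E b x) :: int) = 27"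
    using one[OF bV] sp[of "\<lambda>x. of_bool (E b x) :: int"] adj adj2 irrs by simp
  have o2: "(\<Sum>x\<in>Out. of_bool (E c x) :: int) = 26"
    using one[OF cV] sp[of "\<lambda>x. of_bool (E c x) :: int"] adj adj2 irrs by simp
  have o3: "(\<Sum>x\<in>Out. of_bool (E d x) :: int) = 26"
    using one[OF dV] sp[of "\<lambda>x. of_bool (E d x) :: int"] adj adj2 irrs by simp
  have o4: "(\<Sum>x\<in>Out. of_bool (E e x) :: int) = 26"
    using one[OF eV] sp[of "\<lambda>x. of_bool (E e x) :: int"] adj adj2 irrs by simp
  have p1: "(\<Sum>x\<in>Out. of_bool (E b x \<and> E c x) :: int) = 6"
    using two[OF bV cV] sp[of "\<lambda>x. of_bool (E b x \<and> E c x) :: int"] adj adj2 irrs by simp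
  have p2: "(\<Sum>x\<in>Out. of_bool (E b x \<and> E d x) :: int) = 6"
    using two[OF bV dV] sp[of "\<lambda>x. of_bool (E b x \<and> E d x) :: int"] adj adj2 irrs by simp
  have p3: "(\<Sum>x\<in>Out. of_bool (E b x \<and> E e x) :: int) = 6"
    using two[OF bV eV] sp[of "\<lambda>x. of_bool (E b x \<and> E e x) :: int"] adj adj2 irrs by simp
  have p4: "(\<Sum>x\<in>Out. of_bool (E c x \<and> E d x) :: int) = 5"
    using two[OF cV dV] sp[of "\<lambda>x. of_bool (E c x \<and> E d x) :: int"] adj adj2 irrs by simp
  have p5: "(\<Sum>x\<in>Out. of_bool (E c x \<and> E e x) :: int) = 5"
    using two[OF cV eV] sp[of "\<lambda>x. of_bool (E c x \<and> E e x) :: int"] adj adj2 irrs by simp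
  have p6: "(\<Sum>x\<in>Out. of_bool (E d x \<and> E e x) :: int) = 5"
    using two[OF dV eV] sp[of "\<lambda>x. of_bool (E d x \<and> E e x) :: int"] adj adj2 irrs by simp
  define T where "T x = (of_bool (E b x \<and> E c x) + of_bool (E b x \<and> E d x) + of_bool (E b x \<and> E e x)
     + of_bool (E c x \<and> E d x) + of_bool (E c x \<and> E e x) + of_bool (E d x \<and> E e x)
     - (of_bool (E b x) + of_bool (E c x) + of_bool (E d x) + of_bool (E e x)) + 1 :: int)" for x
  have "(\<Sum>x\<in>Out. T x) = -1"
    unfolding T_def using o1 o2 o3 o4 p1 p2 p3 p4 p5 p6 cOut
    by (simp add: sum.distrib sum_subtractf)
  moreover have "(\<Sum>x\<in>Out. T x) \<ge> 0"
    by (rule sum_nonneg) (simp add: T_def pointwise del: of_bool_eq)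
  ultimately show False by simp
qed

end
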